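(* Let $q>0$. (1) There exists a unique maximizer $A^*$ of $w$ over $[0,D^*]$. It satisfies $A^*\le\sqrt{\max((q-1)/2,0)}$, and for $0\le A\le D^*$ one has $w'(A)\le0$ if and only if $A\ge A^*$. (2) Moreover, $A^*=0$ if and only if $q\le1$. Here $$w(A):=\frac{1}{G_q(A)}\left[(D^* )^q\frac{(F_q+G_q)(A)}{(F_q+G_q)(D^* )}-A^q\right],\quad 0\le A\le D^*.$$
   Context: $F_q(y):=\int_0^\infty u^{q-1}e^{yu-u^2/2}\,\mathrm{d}u$ and $G_q(y):=F_q(-y)$ for $y\in\mathbb{R}$. $D^*>0$ is the unique positive root of $q-D(F_q+G_q)'(D)/(F_q+G_q)(D)=0$. *)

theory Defs
  imports "HOL-Analysis.Analysis"
begin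

definition Fq :: "real \<Rightarrow> real \<Rightarrow> real" where
  "Fq q y = (LBINT u:{0<..}. u powr (q - 1) * exp (y * u - u\<^sup>2 / 2))"

definition Gq :: "real \<Rightarrow> real \<Rightarrow> real" where
  "Gq q y = Fq q (- y)"

definition is_Dstar :: "real \<Rightarrow> real \<Rightarrow> bool" where
  "is_Dstar q D \<longleftrightarrow> D > 0 \<and>
     q - D * deriv (\<lambda>y. Fq q y + Gq q y) D / (Fq q D + Gq q D) = 0"

definition wfun :: "real \<Rightarrow> real \<Rightarrow> real \<Rightarrow> real" where
  "wfun q D A = (D powr q * (Fq q A + Gq q A) / (Fq q D + Gq q D) - A powr q) / Gq q A"

end

theory Submission
  imports Defs
begin



definition K :: "real \<Rightarrow> real \<Rightarrow> real \<Rightarrow> real" where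
  "K s y u = u powr s * exp (y * u - u\<^sup>2 / 2)"

lemma gamma_integrable:
  assumes "s > -1"
  shows "integrable lborel (\<lambda>t. indicator {0..} t * t powr s / exp t :: real)"
proof (rule integrableI_nn_integral_finite)
  show "(\<lambda>t. indicator {0..} t * t powr s / exp t :: real) \<in> borel_measurable lborel"
    by measurable
  show "AE x in lborel. 0 \<le> indicator {0..} x * x powr s / exp x"
    by (auto simp: indicator_def)
  have "Gamma (s+1) = nn_integral lborel (\<lambda>t. ennreal (indicator {0..} t * t powr (s + 1 - 1) / exp t))"
    using assms by (intro Gamma_conv_nn_integral_real) auto
  then show "(\<integral>\<^sup>+ x. ennreal (indicator {0..} x * x powr s / exp x) \<partial>lborel) = ennreal (Gamma (s+1))"
    by simp
qed

lemma K_bound: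
  assumes "u > 0"
  shows "\<bar>K s y u\<bar> \<le> exp ((\<bar>y\<bar>+1)\<^sup>2/2) * (u powr s / exp u)"
proof -
  have "y*u - u\<^sup>2/2 \<le> (\<bar>y\<bar>+1)\<^sup>2/2 - u"
  proof -
    have "y*u \<le> \<bar>y\<bar>*u" using assms by (simp add: mult_right_mono)
    moreover have "0 \<le> (u - (\<bar>y\<bar>+1))\<^sup>2" by simp
    ultimately show ?thesis by (simp add: power2_eq_square algebra_simps)
  qed
  hence "exp (y*u - u\<^sup>2/2) \<le> exp ((\<bar>y\<bar>+1)\<^sup>2/2 - u)" by simp
  also have "\<dots> = exp ((\<bar>y\<bar>+1)\<^sup>2/2) / exp u" by (simp add: exp_diff)
  finally have "exp (y*u - u\<^sup>2/2) \<le> exp ((\<bar>y\<bar>+1)\<^sup>2/2) / exp u" .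
  hence "u powr s * exp (y*u - u\<^sup>2/2) \<le> u powr s * (exp ((\<bar>y\<bar>+1)\<^sup>2/2) / exp u)"
    by (intro mult_left_mono) auto
  then show ?thesis using assms by (simp add: K_def abs_mult mult.commute mult.left_commute)
qed

lemma K_integrable:
  assumes "s > -1"
  shows "set_integrable lborel {0<..} (K s y)"
  unfolding set_integrable_def
proof (rule Bochner_Integration.integrable_bound)
  show "integrable lborel (\<lambda>t. exp ((\<bar>y\<bar>+1)\<^sup>2/2) * (indicator {0..} t * t powr s / exp t))"
    using integrable_mult_right[OF gamma_integrable[OF assms], of "exp ((\<bar>y\<bar>+1)\<^sup>2/2)"] by simp
  show "(\<lambda>x. indicat_real {0<..} x *\<^sub>R K s y x) \<in> borel_measurable lborel"
    unfolding K_def by measurable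
  show "AE x in lborel. norm (indicat_real {0<..} x *\<^sub>R K s y x)
         \<le> norm (exp ((\<bar>y\<bar>+1)\<^sup>2/2) * (indicator {0..} x * x powr s / exp x))"
    using K_bound[of _ s y] by (auto simp: indicator_def)
qed




lemma quot_bound:
  fixes \<phi> \<phi>' :: "real \<Rightarrow> real"
  assumes der: "\<And>y. y \<in> ball y0 r \<Longrightarrow> (\<phi> has_real_derivative \<phi>' y) (at y)"
    and bnd: "\<And>y. y \<in> ball y0 r \<Longrightarrow> \<bar>\<phi>' y\<bar> \<le> B"
    and x: "x \<in> ball y0 r" "x \<noteq> y0"
  shows "\<bar>(\<phi> x - \<phi> y0) / (x - y0)\<bar> \<le> B"
proof (cases "x < y0")
  case True
  have "\<And>t. x \<le> t \<Longrightarrow> t \<le> y0 \<Longrightarrow> (\<phi> has_real_derivative \<phi>' t) (at t)"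
    using x by (intro der) (auto simp: dist_real_def)
  from MVT2[OF True this] obtain z where z: "x < z" "z < y0" "\<phi> y0 - \<phi> x = (y0 - x) * \<phi>' z" by blast
  have zb: "z \<in> ball y0 r" using z x by (auto simp: dist_real_def)
  have "(\<phi> x - \<phi> y0) / (x - y0) = \<phi>' z" using z True by (simp add: field_simps)
  then show ?thesis using bnd[OF zb] by simp
next
  case False
  hence lt: "y0 < x" using x by auto
  have "\<And>t. y0 \<le> t \<Longrightarrow> t \<le> x \<Longrightarrow> (\<phi> has_real_derivative \<phi>' t) (at t)"
    using x by (intro der) (auto simp: dist_real_def)
  from MVT2[OF lt this] obtain z where z: "y0 < z" "z < x" "\<phi> x - \<phi> y0 = (x - y0) * \<phi>' z" by blast
  have zb: "z \<in> ball y0 r" using z x by (auto simp: dist_real_def)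
  have "(\<phi> x - \<phi> y0) / (x - y0) = \<phi>' z" using z lt by (simp add: field_simps)
  then show ?thesis using bnd[OF zb] by simp
qed

lemma deriv_integral:
  fixes f g :: "real \<Rightarrow> 'a \<Rightarrow> real" and h :: "'a \<Rightarrow> real"
  assumes r: "r > 0"
  and int: "\<And>y. y \<in> ball y0 r \<Longrightarrow> integrable M (f y)"
  and der: "\<And>y u. y \<in> ball y0 r \<Longrightarrow> u \<in> space M \<Longrightarrow> ((\<lambda>y. f y u) has_real_derivative g y u) (at y)"
  and bnd: "\<And>y u. y \<in> ball y0 r \<Longrightarrow> u \<in> space M \<Longrightarrow> \<bar>g y u\<bar> \<le> h u"
  and hint: "integrable M h"
  and gm: "g y0 \<in> borel_measurable M"
  shows "((\<lambda>y. integral\<^sup>L M (f y)) has_real_derivative integral\<^sup>L M (g y0)) (at y0)"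
proof -
  have y0: "y0 \<in> ball y0 r" using r by simp
  have "((\<lambda>y. (integral\<^sup>L M (f y) - integral\<^sup>L M (f y0)) / (y - y0)) \<longlongrightarrow> integral\<^sup>L M (g y0))
          (at y0 within ball y0 r)"
    unfolding tendsto_at_iff_sequentially
  proof (intro allI impI)
    fix X :: "nat \<Rightarrow> real" assume X: "\<forall>i. X i \<in> ball y0 r - {y0}" and lim: "X \<longlonglongrightarrow> y0"
    define s where "s i u = (f (X i) u - f y0 u) / (X i - y0)" for i u
    have eq: "(integral\<^sup>L M (f (X i)) - integral\<^sup>L M (f y0)) / (X i - y0) = integral\<^sup>L M (s i)" for i
      unfolding s_def using int[of "X i"] int[OF y0] X
      by (simp add: Bochner_Integration.integral_diff)
    have "(\<lambda>i. integral\<^sup>L M (s i)) \<longlonglongrightarrow> integral\<^sup>L M (g y0)"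
    proof (rule integral_dominated_convergence[where w=h])
      show "g y0 \<in> borel_measurable M" by fact
      show "s i \<in> borel_measurable M" for i
        unfolding s_def using int[of "X i"] int[OF y0] X by auto
      show "integrable M h" by fact
      show "AE u in M. (\<lambda>i. s i u) \<longlonglongrightarrow> g y0 u"
      proof (rule AE_I2)
        fix u assume u: "u \<in> space M"
        have "((\<lambda>y. (f y u - f y0 u) / (y - y0)) \<longlongrightarrow> g y0 u) (at y0)"
          using der[OF y0 u] unfolding has_field_derivative_iff .
        then show "(\<lambda>i. s i u) \<longlonglongrightarrow> g y0 u"
          unfolding tendsto_at_iff_sequentially s_def comp_def using X lim by auto
      qed
      show "AE u in M. norm (s i u) \<le> h u" for i
      proof (rule AE_I2)
        fix u assume u: "u \<in> space M"
        show "norm (s i u) \<le> h u" unfolding s_def real_norm_def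
          by (rule quot_bound[where \<phi>'="\<lambda>y. g y u"]) (use der u bnd X in auto)
      qed
    qed
    then show "((\<lambda>y. (integral\<^sup>L M (f y) - integral\<^sup>L M (f y0)) / (y - y0)) \<circ> X) \<longlonglongrightarrow> integral\<^sup>L M (g y0)"
      using eq by (simp add: comp_def)
  qed
  then show ?thesis
    unfolding has_field_derivative_iff using at_within_open[of y0 "ball y0 r"] r by simp
qed




definition Phi :: "real \<Rightarrow> real \<Rightarrow> real" where
  "Phi s y = (LBINT u:{0<..}. K s y u)"

lemma Fq_Phi: "Fq q y = Phi (q - 1) y"
  unfolding Fq_def Phi_def K_def ..

lemma K_deriv:
  assumes "u > 0"
  shows "((\<lambda>y. K s y u) has_real_derivative K (s+1) y u) (at y)"
proof -
  have "((\<lambda>y. u powr s * exp (y * u - u\<^sup>2 / 2)) has_real_derivative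
          u powr s * (exp (y * u - u\<^sup>2 / 2) * (1 * u - 0))) (at y)"
    by (intro derivative_eq_intros) auto
  moreover have "u powr s * (exp (y * u - u\<^sup>2 / 2) * (1 * u - 0)) = K (s+1) y u"
    using assms by (simp add: K_def powr_add mult.commute mult.left_commute)
  ultimately show ?thesis unfolding K_def by metis
qed

lemma K_pos: "u > 0 \<Longrightarrow> K s y u > 0"
  by (simp add: K_def)

lemma K_mono_y:
  assumes "u > 0" "y \<le> y'"
  shows "K s y u \<le> K s y' u"
  using assms unfolding K_def by (intro mult_left_mono) (auto intro: mult_right_mono)

lemma Phi_deriv:
  assumes s: "s > -1"
  shows "(Phi s has_real_derivative Phi (s+1) y0) (at y0)"
proof -
  have "((\<lambda>y. integral\<^sup>L lborel (\<lambda>u. indicator {0<..} u * K s y u)) has_real_derivative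
          integral\<^sup>L lborel (\<lambda>u. indicator {0<..} u * K (s+1) y0 u)) (at y0)"
  proof (rule deriv_integral[where r=1 and h="\<lambda>u. indicator {0<..} u * K (s+1) (\<bar>y0\<bar>+1) u"])
    show "integrable lborel (\<lambda>u. indicator {0<..} u * K s y u)" for y
      using K_integrable[OF s, of y] unfolding set_integrable_def by simp
    show "((\<lambda>y. indicator {0<..} u * K s y u) has_real_derivative indicator {0<..} u * K (s+1) y u) (at y)" for y u
      by (cases "u > 0") (auto intro!: DERIV_cmult K_deriv simp: indicator_def)
    show "\<bar>indicator {0<..} u * K (s+1) y u\<bar> \<le> indicator {0<..} u * K (s+1) (\<bar>y0\<bar>+1) u"
      if "y \<in> ball y0 1" for y u
    proof (cases "u > 0")
      case True
      have "y \<le> \<bar>y0\<bar>+1" using that by (auto simp: dist_real_def)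
      then show ?thesis using True K_pos[OF True, of "s+1" y] K_mono_y[OF True, of y "\<bar>y0\<bar>+1" "s+1"]
        by (simp add: indicator_def)
    qed (simp add: indicator_def)
    show "integrable lborel (\<lambda>u. indicator {0<..} u * K (s+1) (\<bar>y0\<bar>+1) u)"
      using K_integrable[of "s+1" "\<bar>y0\<bar>+1"] s unfolding set_integrable_def by simp
    show "(\<lambda>u. indicator {0<..} u * K (s+1) y0 u) \<in> borel_measurable lborel"
      unfolding K_def by measurable
  qed simp
  then show ?thesis unfolding Phi_def set_lebesgue_integral_def by simp
qed

lemma Phi_pos:
  assumes s: "s > -1"
  shows "Phi s y > 0"
proof -
  have int: "integrable lborel (\<lambda>u. indicator {0<..} u * K s y u)"
    using K_integrable[OF s, of y] unfolding set_integrable_def by simp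
  have nn: "AE u in lborel. 0 \<le> indicator {0<..} u * K s y u"
    using K_pos by (auto simp: indicator_def less_imp_le)
  have ge: "Phi s y \<ge> 0" unfolding Phi_def set_lebesgue_integral_def
    using nn by (simp add: integral_nonneg_AE)
  show ?thesis
  proof (rule ccontr)
    assume "\<not> ?thesis"
    hence "integral\<^sup>L lborel (\<lambda>u. indicator {0<..} u * K s y u) = 0"
      using ge unfolding Phi_def set_lebesgue_integral_def by simp
    hence "AE u in lborel. indicator {0<..} u * K s y u = 0"
      using integral_nonneg_eq_0_iff_AE[OF int nn] by simp
    hence "AE u in lborel. u \<notin> {0<..1::real}"
      proof eventually_elim
      case (elim u)
      show ?case
      proof
        assume u: "u \<in> {0<..1::real}"
        hence "K s y u > 0" by (intro K_pos) auto
        with u elim show False by (simp add: indicator_def)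
      qed
    qed
    hence "emeasure lborel {0<..1::real} = 0"
      by (subst AE_iff_measurable[symmetric, where P="\<lambda>u. u \<notin> {0<..1::real}"]) auto
    then show False by simp
  qed
qed




lemma K_at_top: "((\<lambda>u. K a y u) \<longlongrightarrow> 0) at_top"
proof -
  obtain k :: nat where k: "a \<le> real k" using real_arch_simple by blast
  define C where "C = exp ((\<bar>y\<bar>+1)\<^sup>2/2)"
  have lim: "((\<lambda>u. C * (u^k / exp u)) \<longlongrightarrow> 0) at_top"
    using tendsto_mult[OF tendsto_const[of C] tendsto_power_div_exp_0[of k]] by simp
  have ev: "\<forall>\<^sub>F u in at_top. 0 \<le> K a y u \<and> K a y u \<le> C * (u^k / exp u)"
    using eventually_ge_at_top[of "1::real"]
  proof eventually_elim
    case (elim u)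
    have "K a y u \<le> C * (u powr a / exp u)" using K_bound[of u a y] elim unfolding C_def by simp
    also have "u powr a \<le> u powr (real k)" using elim k by (intro powr_mono) auto
    hence "C * (u powr a / exp u) \<le> C * (u^k / exp u)"
      using elim by (simp add: C_def powr_realpow divide_right_mono)
    finally show ?case using K_pos[of u a y] elim by simp
  qed
  show ?thesis
    by (rule tendsto_sandwich[of "\<lambda>_. 0" _ _ "\<lambda>u. C * (u^k / exp u)"])
       (use ev lim in \<open>auto elim: eventually_mono\<close>)
qed

lemma K_at_0:
  assumes "a > 0"
  shows "((\<lambda>u. K a y u) \<longlongrightarrow> 0) (at_right 0)"
proof -
  have 1: "((\<lambda>u::real. u powr a) \<longlongrightarrow> 0) (at_right 0)"
    by (rule tendsto_zero_powrI[of "\<lambda>u. u" _ "\<lambda>_. a"])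
       (use assms in \<open>auto intro: tendsto_ident_at eventually_at_rightI[of 0 1]\<close>)
  have 2: "((\<lambda>u::real. exp (y * u - u\<^sup>2 / 2)) \<longlongrightarrow> 1) (at_right 0)"
  proof -
    have "((\<lambda>u::real. exp (y * u - u\<^sup>2 / 2)) \<longlongrightarrow> exp (y * 0 - (0::real)\<^sup>2/2)) (at_right 0)"
      by (intro tendsto_intros) auto
    then show ?thesis by simp
  qed
  show ?thesis unfolding K_def using tendsto_mult[OF 1 2] by simp
qed

lemma K_has_deriv_u:
  assumes "u > 0"
  shows "((\<lambda>u. K (s+1) y u) has_real_derivative
           (s+1) * K s y u + y * K (s+1) y u - K (s+2) y u) (at u)"
proof -
  have "((\<lambda>u. u powr (s+1) * exp (y * u - u\<^sup>2 / 2)) has_real_derivative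
          ((s+1) * u powr (s + 1 - 1)) * exp (y * u - u\<^sup>2 / 2) +
          u powr (s+1) * (exp (y * u - u\<^sup>2 / 2) * (y * 1 - (2 * u ^ 1 * 1) / 2))) (at u)"
    by (intro DERIV_mult has_real_derivative_powr DERIV_exp derivative_eq_intros refl)
       (use assms in auto)
  moreover have "((s+1) * u powr (s + 1 - 1)) * exp (y * u - u\<^sup>2 / 2) +
          u powr (s+1) * (exp (y * u - u\<^sup>2 / 2) * (y * 1 - (2 * u ^ 1 * 1) / 2))
       = (s+1) * K s y u + y * K (s+1) y u - K (s+2) y u"
  proof -
    have "u powr (s+2) = u powr ((s+1)+1)" by (simp add: add.assoc)
    also have "\<dots> = u powr (s+1) * u powr 1" by (rule powr_add)
    also have "\<dots> = u powr (s+1) * u" using assms by simp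
    finally have "u powr (s+2) = u powr (s+1) * u" .
    then show ?thesis unfolding K_def by (simp add: algebra_simps)
  qed
  ultimately have d: "((\<lambda>u. u powr (s+1) * exp (y * u - u\<^sup>2 / 2)) has_real_derivative
           (s+1) * K s y u + y * K (s+1) y u - K (s+2) y u) (at u)" by metis
  have eqf: "(\<lambda>u. K (s+1) y u) = (\<lambda>u. u powr (s+1) * exp (y * u - u\<^sup>2 / 2))"
    by (simp add: K_def fun_eq_iff)
  show ?thesis using d by (simp add: K_def)
qed

lemma einterval_0_inf: "einterval 0 \<infinity> = {0<..}"
  by (auto simp: einterval_def zero_ereal_def)

lemma Phi_rec:
  assumes s: "s > -1"
  shows "Phi (s+2) y = y * Phi (s+1) y + (s+1) * Phi s y"
proof -
  define p where "p u = (s+1) * K s y u + y * K (s+1) y u - K (s+2) y u" for u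
  have i0: "set_integrable lborel {0<..} (K s y)" using K_integrable s by auto
  have i1: "set_integrable lborel {0<..} (K (s+1) y)" using K_integrable s by auto
  have i2: "set_integrable lborel {0<..} (K (s+2) y)" using K_integrable s by auto
  have i0': "set_integrable lborel {0<..} (\<lambda>u. (s+1) * K s y u)"
    using set_integrable_mult_right[OF i0, of "s+1"] by simp
  have i1': "set_integrable lborel {0<..} (\<lambda>u. y * K (s+1) y u)"
    using set_integrable_mult_right[OF i1, of y] by simp
  have ip: "set_integrable lborel {0<..} p"
    unfolding p_def by (intro set_integral_diff set_integral_add i0' i1' i2)
  have "(LBINT u=0..\<infinity>. p u) = 0 - 0"
  proof (rule interval_integral_FTC_integrable[where F="K (s+1) y"])
    show "(0::ereal) < \<infinity>" by simp
    show "(K (s + 1) y has_vector_derivative p x) (at x)" if "0 < ereal x" "ereal x < \<infinity>" for x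
      using K_has_deriv_u[of x s y] that unfolding p_def
      by (simp add: has_real_derivative_iff_has_vector_derivative zero_ereal_def)
    show "isCont p x" if "0 < ereal x" "ereal x < \<infinity>" for x
      using that unfolding p_def K_def by (auto simp: zero_ereal_def intro!: continuous_intros)
    show "set_integrable lborel (einterval 0 \<infinity>) p" using ip by (simp add: einterval_0_inf)
    show "((K (s + 1) y \<circ> real_of_ereal) \<longlongrightarrow> 0) (at_right 0)"
      unfolding zero_ereal_def ereal_tendsto_simps using K_at_0[of "s+1" y] s by simp
    show "((K (s + 1) y \<circ> real_of_ereal) \<longlongrightarrow> 0) (at_left \<infinity>)"
      unfolding ereal_tendsto_simps using K_at_top .
  qed
  hence "(LBINT u:{0<..}. p u) = 0"
    by (simp add: interval_lebesgue_integral_def einterval_0_inf)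
  moreover have "(LBINT u:{0<..}. p u) = (s+1) * Phi s y + y * Phi (s+1) y - Phi (s+2) y"
  proof -
    have eqp: "(LBINT u:{0<..}. p u) = (LBINT u:{0<..}. (s+1) * K s y u + y * K (s+1) y u - K (s+2) y u)"
      by (simp add: p_def)
    have a: "set_integrable lborel {0<..} (\<lambda>u. (s+1) * K s y u + y * K (s+1) y u)"
      using i0' i1' by auto
    have "(LBINT u:{0<..}. (s+1) * K s y u + y * K (s+1) y u - K (s+2) y u) =
          (LBINT u:{0<..}. (s+1) * K s y u + y * K (s+1) y u) - (LBINT u:{0<..}. K (s+2) y u)"
      by (rule set_integral_diff(2)[OF a i2])
    also have "(LBINT u:{0<..}. (s+1) * K s y u + y * K (s+1) y u) =
        (LBINT u:{0<..}. (s+1) * K s y u) + (LBINT u:{0<..}. y * K (s+1) y u)"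
      by (rule set_integral_add(2)[OF i0' i1'])
    finally show ?thesis unfolding eqp Phi_def by simp
  qed
  ultimately show ?thesis by simp
qed




lemma Phi_deriv_chain:
  assumes "s > -1" "(f has_real_derivative f') (at x within X)"
  shows "((\<lambda>x. Phi s (f x)) has_real_derivative Phi (s+1) (f x) * f') (at x within X)"
  using DERIV_chain2[OF Phi_deriv[OF assms(1)] assms(2)] .

locale L =
  fixes q D :: real
  assumes q: "q > 0" and Ds: "is_Dstar q D"
begin

definition "f0 y = Phi (q-1) y"
definition "f1 y = Phi q y"
definition "f2 y = Phi (q+1) y"
definition "g0 y = Phi (q-1) (-y)"
definition "g1 y = Phi q (-y)"
definition "g2 y = Phi (q+1) (-y)"
definition "S y = f0 y + g0 y"
definition "c = D powr q / S D"
definition "N A = c * S A - A powr q"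
definition "N1 A = c * (f1 A - g1 A) - q * A powr (q-1)"
definition "W A = N1 A * g0 A + N A * g1 A"
definition "V A = W A * exp (-(A\<^sup>2)/2)"

lemma D_pos: "D > 0" using Ds by (simp add: is_Dstar_def)

lemma pos: "f0 y > 0" "f1 y > 0" "f2 y > 0" "g0 y > 0" "g1 y > 0" "g2 y > 0" "S y > 0"
  using q by (auto simp: f0_def f1_def f2_def g0_def g1_def g2_def S_def intro!: Phi_pos add_pos_pos)

lemma c_pos: "c > 0" using pos D_pos by (simp add: c_def)

lemma d_f0: "(f0 has_real_derivative f1 y) (at y within X)"
proof -
  have "((\<lambda>x. Phi (q-1) x) has_real_derivative Phi (q-1+1) y * 1) (at y within X)"
    by (rule Phi_deriv_chain) (use q in \<open>auto intro: derivative_eq_intros\<close>)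
  then show ?thesis by (simp add: f0_def[abs_def] f1_def)
qed

lemma d_f1: "(f1 has_real_derivative f2 y) (at y within X)"
proof -
  have "((\<lambda>x. Phi q x) has_real_derivative Phi (q+1) y * 1) (at y within X)"
    by (rule Phi_deriv_chain) (use q in \<open>auto intro: derivative_eq_intros\<close>)
  then show ?thesis by (simp add: f1_def[abs_def] f2_def)
qed

lemma d_g0: "(g0 has_real_derivative - g1 y) (at y within X)"
proof -
  have "((\<lambda>x. Phi (q-1) (-x)) has_real_derivative Phi (q-1+1) (-y) * (-1)) (at y within X)"
    by (rule Phi_deriv_chain) (use q in \<open>auto intro!: derivative_eq_intros\<close>)
  then show ?thesis by (simp add: g0_def[abs_def] g1_def)
qed

lemma d_g1: "(g1 has_real_derivative - g2 y) (at y within X)"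
proof -
  have "((\<lambda>x. Phi q (-x)) has_real_derivative Phi (q+1) (-y) * (-1)) (at y within X)"
    by (rule Phi_deriv_chain) (use q in \<open>auto intro!: derivative_eq_intros\<close>)
  then show ?thesis by (simp add: g1_def[abs_def] g2_def)
qed

lemma rec_f: "f2 y = y * f1 y + q * f0 y"
  using Phi_rec[of "q-1" y] q by (simp add: f0_def f1_def f2_def add.commute)

lemma rec_g: "g2 y = - y * g1 y + q * g0 y"
  using Phi_rec[of "q-1" "-y"] q by (simp add: g0_def g1_def g2_def add.commute)

lemma d_S: "(S has_real_derivative f1 y - g1 y) (at y within X)"
  unfolding S_def[abs_def] using DERIV_add[OF d_f0 d_g0] by simp

lemma wfun_eq: "wfun q D A = N A / g0 A"
proof -
  have "Fq q y + Gq q y = S y" for y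
    by (simp add: S_def f0_def g0_def Fq_Phi Gq_def)
  then show ?thesis
    unfolding wfun_def N_def c_def using pos by (simp add: Gq_def Fq_Phi g0_def)
qed

lemma N_D: "N D = 0"
  using pos(7)[of D] by (simp add: N_def c_def)

lemma N1_D: "N1 D = 0"
proof -
  have "(\<lambda>y. Fq q y + Gq q y) = S"
    by (simp add: fun_eq_iff S_def f0_def g0_def Fq_Phi Gq_def)
  hence "deriv (\<lambda>y. Fq q y + Gq q y) D = f1 D - g1 D"
    using d_S[of D UNIV] by (simp add: DERIV_imp_deriv)
  moreover have "Fq q D + Gq q D = S D"
    by (simp add: S_def f0_def g0_def Fq_Phi Gq_def)
  ultimately have "q - D * (f1 D - g1 D) / S D = 0" using Ds by (simp add: is_Dstar_def)
  hence e: "f1 D - g1 D = q * S D / D" using pos(7)[of D] D_pos by (simp add: field_simps)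
  have "c * (f1 D - g1 D) = D powr q / D * q" using pos(7)[of D] D_pos by (simp add: c_def e)
  also have "D powr q / D = D powr (q-1)" using D_pos by (simp add: powr_diff)
  finally show ?thesis by (simp add: N1_def)
qed

lemma W_D: "W D = 0" by (simp add: W_def N_D N1_D)
lemma V_D: "V D = 0" by (simp add: V_def W_D)

lemma d_N: "A > 0 \<Longrightarrow> (N has_real_derivative N1 A) (at A within X)"
  unfolding N_def[abs_def] N1_def
  by (rule derivative_eq_intros d_S has_real_derivative_powr[THEN has_field_derivative_at_within] refl | simp)+

lemma d_N1: "A > 0 \<Longrightarrow> (N1 has_real_derivative c * (f2 A + g2 A) - q * ((q-1) * A powr (q-1-1))) (at A within X)"
  unfolding N1_def[abs_def]
  by (rule derivative_eq_intros d_f1 d_g1 has_real_derivative_powr[THEN has_field_derivative_at_within] refl | simp)+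

lemma d_w: "A > 0 \<Longrightarrow> (wfun q D has_real_derivative W A / (g0 A)\<^sup>2) (at A within X)"
proof -
  assume A: "A > 0"
  have "((\<lambda>A. N A / g0 A) has_real_derivative (N1 A * g0 A - N A * (- g1 A)) / (g0 A * g0 A)) (at A within X)"
    by (rule DERIV_divide[OF d_N[OF A] d_g0]) (use pos in \<open>simp add: less_imp_neq[symmetric]\<close>)
  moreover have "(\<lambda>A. N A / g0 A) = wfun q D" by (simp add: fun_eq_iff wfun_eq)
  ultimately show ?thesis by (simp add: W_def power2_eq_square)
qed

end


context L begin

lemma powr_facts:
  assumes "A > 0"
  shows "A powr (q-1) = A powr (q-2) * A" "A powr q = A powr (q-2) * A\<^sup>2" "A powr (q-1-1) = A powr (q-2)"
proof -
  have "A powr (q-1) = A powr ((q-2) + 1)" by (simp add: algebra_simps)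
  also have "\<dots> = A powr (q-2) * A powr 1" by (rule powr_add)
  also have "\<dots> = A powr (q-2) * A" using assms by simp
  finally show "A powr (q-1) = A powr (q-2) * A" .
  have "A powr q = A powr ((q-2) + 2)" by (simp add: algebra_simps)
  also have "\<dots> = A powr (q-2) * A powr 2" by (rule powr_add)
  also have "\<dots> = A powr (q-2) * A\<^sup>2" using assms by (simp add: powr_realpow[of A 2, simplified])
  finally show "A powr q = A powr (q-2) * A\<^sup>2" .
  show "A powr (q-1-1) = A powr (q-2)" by simp
qed

lemma d_V:
  assumes A: "A > 0"
  shows "(V has_real_derivative q * A powr (q-2) * (2*A\<^sup>2 - (q-1)) * g0 A * exp (-(A\<^sup>2)/2)) (at A within X)"
proof -
  have dW: "(W has_real_derivative
      (c * (f2 A + g2 A) - q * ((q-1) * A powr (q-1-1))) * g0 A + (- g1 A) * N1 A +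
      (N1 A * g1 A + (- g2 A) * N A)) (at A within X)"
    unfolding W_def[abs_def]
    by (intro DERIV_add DERIV_mult d_N1 d_g0 d_N d_g1 A)
  have dE: "((\<lambda>A. exp (-(A\<^sup>2)/2)) has_real_derivative exp (-(A\<^sup>2)/2) * (- A)) (at A within X)"
    by (rule derivative_eq_intros refl | simp)+
  have d: "(V has_real_derivative
      ((c * (f2 A + g2 A) - q * ((q-1) * A powr (q-1-1))) * g0 A + (- g1 A) * N1 A +
      (N1 A * g1 A + (- g2 A) * N A)) * exp (-(A\<^sup>2)/2) + (exp (-(A\<^sup>2)/2) * (- A)) * W A) (at A within X)"
    unfolding V_def[abs_def] by (rule DERIV_mult[OF dW dE])
  define a where "a = A powr (q-2)"
  note pf = powr_facts[OF A, folded a_def]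
  have "((c * (f2 A + g2 A) - q * ((q-1) * A powr (q-1-1))) * g0 A + (- g1 A) * N1 A +
      (N1 A * g1 A + (- g2 A) * N A)) * exp (-(A\<^sup>2)/2) + (exp (-(A\<^sup>2)/2) * (- A)) * W A
     = q * A powr (q-2) * (2*A\<^sup>2 - (q-1)) * g0 A * exp (-(A\<^sup>2)/2)"
    unfolding W_def N1_def N_def S_def rec_f rec_g pf a_def[symmetric]
    by (simp add: algebra_simps power2_eq_square)
  with d show ?thesis by simp
qed

end


context L begin

lemma cont_basic: "continuous_on X f0" "continuous_on X f1" "continuous_on X g0" "continuous_on X g1" "continuous_on X S"
  by (rule DERIV_continuous_on, rule d_f0 d_f1 d_g0 d_g1 d_S)+

lemma cont_powr: "r > 0 \<Longrightarrow> continuous_on {0..} (\<lambda>A::real. A powr r)"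
  by (rule continuous_on_powr') (auto intro: continuous_intros)

lemma cont_N: "continuous_on {0..} N"
  unfolding N_def[abs_def]
  by (intro continuous_on_diff continuous_on_mult continuous_on_const cont_basic cont_powr q)

lemma cont_V0: "q > 1 \<Longrightarrow> continuous_on {0..} V"
  unfolding V_def[abs_def] W_def N1_def[abs_def]
  by (intro continuous_on_mult continuous_on_add continuous_on_diff continuous_on_const cont_basic
      cont_N cont_powr continuous_on_exp continuous_on_minus continuous_on_divide continuous_on_power
      continuous_on_id) auto

lemma cont_Vpos: "continuous_on {a..b} V" if "a > 0"
  by (rule DERIV_continuous_on, rule d_V) (use that in auto)

lemma cont_w: "continuous_on {0..} (wfun q D)"
proof -
  have "continuous_on {0..} (\<lambda>A. N A / g0 A)"
    using cont_N cont_basic pos by (intro continuous_intros) (auto simp: less_imp_neq[symmetric])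
  then show ?thesis by (simp add: wfun_eq[abs_def])
qed

lemma V_incr:
  assumes "0 \<le> a" "a < b" "continuous_on {a..b} V" "\<And>x. a < x \<Longrightarrow> x < b \<Longrightarrow> 2*x\<^sup>2 > q-1"
  shows "V a < V b"
proof (rule DERIV_pos_imp_increasing_open[OF assms(2) _ assms(3)])
  fix x assume x: "a < x" "x < b"
  have "x > 0" using x assms by auto
  have "q * x powr (q-2) * (2*x\<^sup>2 - (q-1)) * g0 x * exp (-(x\<^sup>2)/2) > 0"
    using q \<open>x>0\<close> pos(4)[of x] assms(4)[OF x] by (intro mult_pos_pos) auto
  then show "\<exists>y. DERIV V x :> y \<and> y > 0" using d_V[OF \<open>x > 0\<close>] by blast
qed

lemma V_decr:
  assumes "0 \<le> a" "a < b" "continuous_on {a..b} V" "\<And>x. a < x \<Longrightarrow> x < b \<Longrightarrow> 2*x\<^sup>2 < q-1"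
  shows "V a > V b"
proof (rule DERIV_neg_imp_decreasing_open[OF assms(2) _ assms(3)])
  fix x assume x: "a < x" "x < b"
  have "x > 0" using x assms by auto
  have "q * x powr (q-2) * ((q-1) - 2*x\<^sup>2) * g0 x * exp (-(x\<^sup>2)/2) > 0"
    using q \<open>x>0\<close> pos(4)[of x] assms(4)[OF x] by (intro mult_pos_pos) auto
  hence "q * x powr (q-2) * (2*x\<^sup>2 - (q-1)) * g0 x * exp (-(x\<^sup>2)/2) < 0"
    by (simp add: algebra_simps)
  then show "\<exists>y. DERIV V x :> y \<and> y < 0" using d_V[OF \<open>x > 0\<close>] by blast
qed

lemma V0_pos: "q > 1 \<Longrightarrow> V 0 > 0"
proof -
  assume q1: "q > 1"
  have "N1 0 = 0" using q1 by (simp add: N1_def f1_def g1_def)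
  moreover have "N 0 > 0" using q c_pos pos(7)[of 0] by (simp add: N_def)
  ultimately show ?thesis using pos(5)[of 0] by (simp add: V_def W_def)
qed

end



lemma powr_deriv0:
  assumes "(r::real) \<ge> 1"
  shows "((\<lambda>x. x powr r) has_real_derivative (if r = 1 then 1 else 0)) (at 0 within {0..})"
proof (cases "r = 1")
  case True
  have "((\<lambda>x::real. x) has_real_derivative 1) (at 0 within {0..})" by (rule DERIV_ident)
  then have "((\<lambda>x::real. x powr 1) has_real_derivative 1) (at 0 within {0..})"
    by (rule has_field_derivative_transform_within[where d=1]) auto
  then show ?thesis using True by simp
next
  case False
  hence r: "r > 1" using assms by simp
  have lim: "((\<lambda>y::real. y powr (r-1)) \<longlongrightarrow> 0) (at 0 within {0..})"
    by (rule tendsto_zero_powrI[of "\<lambda>y. y" _ "\<lambda>_. r-1" "r-1"])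
       (use r in \<open>auto simp: eventually_at_filter intro: tendsto_ident_at\<close>)
  have ev: "\<forall>\<^sub>F y in at 0 within {0..}. y powr (r-1) = (y powr r - 0 powr r) / (y - 0)"
    unfolding eventually_at_filter
  proof (rule always_eventually, intro allI impI)
    fix y :: real assume "y \<noteq> 0" "y \<in> {0..}"
    hence "y > 0" by auto
    thus "y powr (r-1) = (y powr r - 0 powr r)/(y - 0)" by (simp add: powr_diff)
  qed
  have "((\<lambda>y. (y powr r - 0 powr r) / (y - 0)) \<longlongrightarrow> 0) (at 0 within {0..})"
    using tendsto_cong[OF ev] lim by simp
  then show ?thesis using False unfolding has_field_derivative_iff by simp
qed

context L begin

lemma sqrt_facts:
  assumes "x > 0"
  shows "x < sqrt ((q-1)/2) \<Longrightarrow> 2*x\<^sup>2 < q-1" and "x > sqrt ((q-1)/2) \<Longrightarrow> q > 1 \<Longrightarrow> 2*x\<^sup>2 > q-1"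
proof -
  assume "x < sqrt ((q-1)/2)"
  hence "x\<^sup>2 < (sqrt ((q-1)/2))\<^sup>2" using assms by (intro power_strict_mono) auto
  moreover have "q - 1 > 0"
  proof -
    have "sqrt ((q-1)/2) > 0" using \<open>x < sqrt ((q-1)/2)\<close> assms by linarith
    hence "(q-1)/2 > 0" by simp
    thus ?thesis by simp
  qed
  ultimately show "2*x\<^sup>2 < q-1" by simp
next
  assume "x > sqrt ((q-1)/2)" "q > 1"
  hence "x\<^sup>2 > (sqrt ((q-1)/2))\<^sup>2" by (intro power_strict_mono) auto
  then show "2*x\<^sup>2 > q-1" using \<open>q > 1\<close> by simp
qed

lemma sign_structure:
  obtains Astar where "0 \<le> Astar" "Astar \<le> D" "Astar \<le> sqrt (max ((q-1)/2) 0)"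
   "\<And>A. 0 < A \<Longrightarrow> A \<le> D \<Longrightarrow> A < Astar \<Longrightarrow> V A > 0"
   "\<And>A. 0 < A \<Longrightarrow> A \<le> D \<Longrightarrow> Astar \<le> A \<Longrightarrow> V A \<le> 0"
   "\<And>A. 0 < A \<Longrightarrow> A < D \<Longrightarrow> Astar < A \<Longrightarrow> V A < 0"
   "Astar = 0 \<longleftrightarrow> q \<le> 1"
proof (cases "q \<le> 1")
  case True
  have neg: "V A < 0" if "0 < A" "A < D" for A
  proof -
    have "V A < V D"
    proof (rule V_incr)
      show "continuous_on {A..D} V" using cont_Vpos that by auto
      fix x assume "A < x" "x < D"
      hence "x > 0" using that by auto
      hence "x\<^sup>2 > 0" by simp
      then show "q - 1 < 2*x\<^sup>2" using True by linarith
    qed (use that in auto)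
    then show ?thesis using V_D by simp
  qed
  show ?thesis
  proof (rule that[of 0])
    show "V A \<le> 0" if "0 < A" "A \<le> D" "0 \<le> A" for A
      using neg[of A] that V_D by (cases "A = D") auto
  qed (use True neg D_pos in auto)
next
  case False
  hence q1: "q > 1" by simp
  define a0 where "a0 = sqrt ((q-1)/2)"
  have a0: "a0 > 0" using q1 by (simp add: a0_def)
  have bnd: "sqrt (max ((q-1)/2) 0) = a0" using q1 by (simp add: a0_def max_def)
  have lt: "2*x\<^sup>2 < q-1" if "0 < x" "x < a0" for x using sqrt_facts(1)[OF that(1)] that by (simp add: a0_def)
  have gt: "2*x\<^sup>2 > q-1" if "0 < x" "x > a0" for x using sqrt_facts(2)[OF that(1)] that q1 by (simp add: a0_def)
  show ?thesis
  proof (cases "D \<le> a0")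
    case True
    have pos: "V A > 0" if "0 < A" "A < D" for A
    proof -
      have "V A > V D"
      proof (rule V_decr)
        show "continuous_on {A..D} V" using cont_Vpos that by auto
        fix x assume "A < x" "x < D"
        then show "2*x\<^sup>2 < q - 1" using that True by (intro lt) auto
      qed (use that in auto)
      then show ?thesis using V_D by simp
    qed
    show ?thesis
    proof (rule that[of D])
      show "D \<le> sqrt (max ((q-1)/2) 0)" using True bnd by simp
      show "0 \<le> D" using D_pos by simp
      show "D \<le> D" by simp
      show "V A > 0" if "0 < A" "A \<le> D" "A < D" for A using pos that by simp
      show "V A \<le> 0" if "0 < A" "A \<le> D" "D \<le> A" for A using that V_D by simp
      show "V A < 0" if "0 < A" "A < D" "D < A" for A using that by simp
      show "D = 0 \<longleftrightarrow> q \<le> 1" using D_pos q1 by simp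
    qed
  next
    case False
    have Va0: "V a0 < 0"
    proof -
      have "V a0 < V D"
      proof (rule V_incr)
        show "continuous_on {a0..D} V" using cont_Vpos a0 by auto
        fix x assume "a0 < x" "x < D"
        then show "q - 1 < 2*x\<^sup>2" using a0 by (intro gt) auto
      qed (use a0 False in auto)
      then show ?thesis using V_D by simp
    qed
    have c0: "continuous_on {0..a0} V" using cont_V0[OF q1] by (rule continuous_on_subset) auto
    obtain As where As: "0 \<le> As" "As \<le> a0" "V As = 0"
      using IVT2'[of V a0 0 0, OF _ _ _ c0] Va0 V0_pos[OF q1] a0 by auto
    have As0: "As > 0" using As V0_pos[OF q1] by (cases "As = 0") auto
    have Asa: "As < a0" using As Va0 by (cases "As = a0") auto
    have dec: "V x > V y" if "0 \<le> x" "x < y" "y \<le> a0" for x y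
    proof (rule V_decr)
      show "continuous_on {x..y} V" using c0 by (rule continuous_on_subset) (use that in auto)
      fix t assume "x < t" "t < y" then show "2*t\<^sup>2 < q-1" using that by (intro lt) auto
    qed (use that in auto)
    have inc: "V x < V y" if "a0 \<le> x" "x < y" for x y
    proof (rule V_incr)
      show "continuous_on {x..y} V" using cont_Vpos a0 that by auto
      fix t assume "x < t" "t < y" then show "2*t\<^sup>2 > q-1" using that a0 by (intro gt) auto
    qed (use that a0 in auto)
    have neg: "V A < 0" if "0 < A" "A < D" "As < A" for A
    proof (cases "A \<le> a0")
      case True
      then show ?thesis using dec[of As A] As that by auto
    next
      case False
      then show ?thesis using inc[of A D] V_D that by auto
    qed
    show ?thesis
    proof (rule that[of As])
      show "As \<le> sqrt (max ((q-1)/2) 0)" using Asa bnd by simp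
      show "V A > 0" if "0 < A" "A \<le> D" "A < As" for A
        using dec[of A As] that As by auto
      show "V A \<le> 0" if "0 < A" "A \<le> D" "As \<le> A" for A
      proof (cases "A = D")
        case True then show ?thesis using V_D by simp
      next
        case False
        show ?thesis
        proof (cases "A = As")
          case True then show ?thesis using As by simp
        next
          case False
          then show ?thesis using neg[of A] that \<open>A \<noteq> D\<close> by simp
        qed
      qed
      show "0 \<le> As" using As by simp
      show "As \<le> D" using Asa False by simp
      show "V A < 0" if "0 < A" "A < D" "As < A" for A using neg that by simp
      show "As = 0 \<longleftrightarrow> q \<le> 1" using As0 q1 by simp
    qed
  qed
qed

end



lemma nontriv_Icc:
  fixes A D :: real
  assumes "0 \<le> A" "A \<le> D" "0 < D"
  shows "at A within {0..D} \<noteq> bot"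
proof -
  consider "A = 0" | "A = D" | "0 < A \<and> A < D" using assms by linarith
  then show ?thesis
  proof cases
    case 1 then show ?thesis using assms at_within_Icc_at_right[of 0 D] by simp
  next
    case 2 then show ?thesis using assms at_within_Icc_at_left[of 0 D] by simp
  next
    case 3 then show ?thesis using at_within_Icc_at[of 0 A D] by simp
  qed
qed

context L begin

definition "N1z = c * (f1 0 - g1 0) - (if q = 1 then 1 else 0)"

lemma d_w0:
  assumes "q \<ge> 1"
  shows "(wfun q D has_real_derivative (N1z * g0 0 - N 0 * (- g1 0)) / (g0 0 * g0 0)) (at 0 within {0..})"
proof -
  have dN: "(N has_real_derivative c * (f1 0 - g1 0) - (if q = 1 then 1 else 0)) (at 0 within {0..})"
    unfolding N_def[abs_def] by (intro DERIV_diff DERIV_cmult d_S powr_deriv0 assms)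
  have "((\<lambda>A. N A / g0 A) has_real_derivative (N1z * g0 0 - N 0 * (- g1 0)) / (g0 0 * g0 0)) (at 0 within {0..})"
    unfolding N1z_def by (rule DERIV_divide[OF dN d_g0]) (use pos(4)[of 0] in simp)
  moreover have "(\<lambda>A. N A / g0 A) = wfun q D" by (simp add: fun_eq_iff wfun_eq)
  ultimately show ?thesis by simp
qed

lemma N1z_q1: "q > 1 \<Longrightarrow> N1z = N1 0"
  by (simp add: N1z_def N1_def)

lemma main:
  shows "\<exists>Astar.
     (\<exists>!A. A \<in> {0..D} \<and> (\<forall>B\<in>{0..D}. wfun q D B \<le> wfun q D A))
   \<and> Astar \<in> {0..D} \<and> (\<forall>B\<in>{0..D}. wfun q D B \<le> wfun q D Astar)
   \<and> Astar \<le> sqrt (max ((q - 1) / 2) 0)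
   \<and> (\<forall>A\<in>{0<..D}. wfun q D differentiable (at A))
   \<and> (1 \<le> q \<longrightarrow> wfun q D differentiable (at 0 within {0..D}))
   \<and> (\<forall>A\<in>{0..D}. \<forall>d. (wfun q D has_real_derivative d) (at A within {0..D}) \<longrightarrow>
          (d \<le> 0 \<longleftrightarrow> Astar \<le> A))
   \<and> (Astar = 0 \<longleftrightarrow> q \<le> 1)"
proof -
  obtain As where As: "0 \<le> As" "As \<le> D" "As \<le> sqrt (max ((q-1)/2) 0)"
   "\<And>A. 0 < A \<Longrightarrow> A \<le> D \<Longrightarrow> A < As \<Longrightarrow> V A > 0"
   "\<And>A. 0 < A \<Longrightarrow> A \<le> D \<Longrightarrow> As \<le> A \<Longrightarrow> V A \<le> 0"
   "\<And>A. 0 < A \<Longrightarrow> A < D \<Longrightarrow> As < A \<Longrightarrow> V A < 0"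
   "As = 0 \<longleftrightarrow> q \<le> 1"
    by (rule sign_structure) blast
  define w where "w = wfun q D"
  have signV: "sgn (W A / (g0 A)\<^sup>2) = sgn (V A)" for A
  proof -
    have "(g0 A)\<^sup>2 > 0" using pos(4)[of A] by simp
    moreover have "exp (-(A\<^sup>2)/2) > 0" by simp
    ultimately show ?thesis using pos(4)[of A] by (simp add: V_def sgn_mult sgn_divide)
  qed
  have Vpos: "W A / (g0 A)\<^sup>2 > 0 \<longleftrightarrow> V A > 0" for A
    using signV[of A] by (metis sgn_greater)
  have Vneg: "W A / (g0 A)\<^sup>2 < 0 \<longleftrightarrow> V A < 0" for A
    using signV[of A] by (metis sgn_less)
  have cw: "continuous_on {x..y} w" if "0 \<le> x" for x y
    unfolding w_def using cont_w by (rule continuous_on_subset) (use that in auto)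
  have incr: "w x < w y" if "0 \<le> x" "x < y" "y \<le> As" for x y
  proof (rule DERIV_pos_imp_increasing_open[OF that(2) _ cw[OF that(1)]])
    fix t assume t: "x < t" "t < y"
    have "V t > 0" using As(4)[of t] t that As by auto
    then show "\<exists>d. DERIV w t :> d \<and> d > 0"
      using d_w[of t UNIV] t that Vpos[of t] unfolding w_def by auto
  qed
  have decr: "w x > w y" if "As \<le> x" "x < y" "y \<le> D" for x y
  proof (rule DERIV_neg_imp_decreasing_open[OF that(2) _ cw])
    fix t assume t: "x < t" "t < y"
    have "V t < 0" using As(6)[of t] t that As by auto
    then show "\<exists>d. DERIV w t :> d \<and> d < 0"
      using d_w[of t UNIV] t that Vneg[of t] As unfolding w_def by auto
  qed (use that As in auto)
  have strict: "w B < w As" if "B \<in> {0..D}" "B \<noteq> As" for B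
  proof (cases "B < As")
    case True then show ?thesis using incr[of B As] that by auto
  next
    case False then show ?thesis using decr[of As B] that by auto
  qed
  have maxi: "\<forall>B\<in>{0..D}. w B \<le> w As"
  proof
    fix B assume B: "B \<in> {0..D}"
    show "w B \<le> w As"
    proof (cases "B = As")
      case False then show ?thesis using strict[OF B] by simp
    qed simp
  qed
  have uniq: "\<exists>!A. A \<in> {0..D} \<and> (\<forall>B\<in>{0..D}. w B \<le> w A)"
  proof (rule ex1I[of _ As])
    show "As \<in> {0..D} \<and> (\<forall>B\<in>{0..D}. w B \<le> w As)" using maxi As by auto
    fix A assume H: "A \<in> {0..D} \<and> (\<forall>B\<in>{0..D}. w B \<le> w A)"
    have "As \<in> {0..D}" using As by simp
    hence le: "w As \<le> w A" using H by blast
    show "A = As"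
    proof (rule ccontr)
      assume "A \<noteq> As"
      hence "w A < w As" using strict H by blast
      with le show False by simp
    qed
  qed
  have diff: "\<forall>A\<in>{0<..D}. w differentiable (at A)"
  proof
    fix A assume "A \<in> {0<..D}"
    hence "A > 0" by simp
    from d_w[OF this, of UNIV] show "w differentiable (at A)"
      unfolding w_def differentiable_def has_field_derivative_def by blast
  qed
  have diff0: "1 \<le> q \<longrightarrow> w differentiable (at 0 within {0..D})"
  proof
    assume "1 \<le> q"
    from DERIV_subset[OF d_w0[OF this], of "{0..D}"] show "w differentiable (at 0 within {0..D})"
      unfolding w_def differentiable_def has_field_derivative_def by auto
  qed
  have derivs: "\<forall>A\<in>{0..D}. \<forall>d. (w has_real_derivative d) (at A within {0..D}) \<longrightarrow> (d \<le> 0 \<longleftrightarrow> As \<le> A)"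
  proof (intro ballI allI impI)
    fix A d assume A: "A \<in> {0..D}" and d: "(w has_real_derivative d) (at A within {0..D})"
    have nt: "at A within {0..D} \<noteq> bot" using A D_pos by (intro nontriv_Icc) auto
    show "d \<le> 0 \<longleftrightarrow> As \<le> A"
    proof (cases "A > 0")
      case True
      have "d = W A / (g0 A)\<^sup>2"
        using has_field_derivative_unique[OF d d_w[OF True, of "{0..D}", folded w_def] nt] .
      moreover have "V A > 0" if "A < As" using As(4)[of A] True A that by auto
      moreover have "V A \<le> 0" if "As \<le> A" using As(5)[of A] True A that by auto
      ultimately show ?thesis using Vpos[of A] by (cases "A < As") auto
    next
      case False
      hence A0: "A = 0" using A by auto
      show ?thesis
      proof (cases "q \<le> 1")
        case True
        hence "As = 0" using As by simp
        have "d \<le> 0"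
        proof -
          have lim: "((\<lambda>y. (w y - w 0) / (y - 0)) \<longlongrightarrow> d) (at 0 within {0..D})"
            using d A0 unfolding has_field_derivative_iff by simp
          have ev: "\<forall>\<^sub>F y in at 0 within {0..D}. (w y - w 0) / (y - 0) \<le> 0"
            unfolding eventually_at_filter
          proof (rule always_eventually, intro allI impI)
            fix y assume "y \<noteq> 0" "y \<in> {0..D}"
            hence "w y < w 0" "y > 0" using decr[of 0 y] \<open>As = 0\<close> by auto
            thus "(w y - w 0) / (y - 0) \<le> 0" by (simp add: divide_nonpos_pos)
          qed
          show ?thesis using tendsto_upperbound[OF lim ev] nt A0 by simp
        qed
        then show ?thesis using \<open>As = 0\<close> A0 by simp
      next
        case False
        hence q1: "q > 1" by simp
        have q1': "1 \<le> q" using q1 by simp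
        have d0: "(w has_real_derivative d) (at 0 within {0..D})" using d A0 by simp
        have nt0: "at 0 within {0..D} \<noteq> bot" using nt A0 by simp
        have "d = (N1z * g0 0 - N 0 * (- g1 0)) / (g0 0 * g0 0)"
          by (rule has_field_derivative_unique[OF d0 DERIV_subset[OF d_w0[OF q1'], of "{0..D}", folded w_def] nt0]) auto
        also have "\<dots> = W 0 / (g0 0)\<^sup>2" using q1 by (simp add: N1z_q1 W_def power2_eq_square)
        finally have "d > 0" using Vpos[of 0] V0_pos[OF q1] by simp
        moreover have "As > 0" using As q1 by auto
        ultimately show ?thesis using A0 by simp
      qed
    qed
  qed
  have As_in: "As \<in> {0..D}" using As by simp
  show ?thesis
    unfolding w_def[symmetric]
    by (intro exI[of _ As] conjI uniq As_in maxi As(3) diff diff0 derivs As(7))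
qed

end

theorem lemma5p2:
  fixes q D :: real
  assumes "q > 0" and "is_Dstar q D"
  shows "\<exists>Astar.
     (\<exists>!A. A \<in> {0..D} \<and> (\<forall>B\<in>{0..D}. wfun q D B \<le> wfun q D A))
   \<and> Astar \<in> {0..D} \<and> (\<forall>B\<in>{0..D}. wfun q D B \<le> wfun q D Astar)
   \<and> Astar \<le> sqrt (max ((q - 1) / 2) 0)
   \<and> (\<forall>A\<in>{0<..D}. wfun q D differentiable (at A))
   \<and> (1 \<le> q \<longrightarrow> wfun q D differentiable (at 0 within {0..D}))
   \<and> (\<forall>A\<in>{0..D}. \<forall>d. (wfun q D has_real_derivative d) (at A within {0..D}) \<longrightarrow>
          (d \<le> 0 \<longleftrightarrow> Astar \<le> A))
   \<and> (Astar = 0 \<longleftrightarrow> q \<le> 1)"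
proof -
  interpret L q D using assms by unfold_locales
  show ?thesis by (rule main)
qed



end
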